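(* Let $X$ be a compact metrizable countable space and $f:X\to X$ a continuous function such that $(X,f)$ is transitive. If either $f^p$ is continuous for every $p\in\mathbb N^*$, or $|\omega_f(x)|=1$ for every accumulation point $x$ of $X$, then the Ellis semigroup $E(X,f)$ is homeomorphic to $X$.
   Context: $(X,f)$ is transitive if some point has dense orbit $\{f^n(x):n\in\mathbb N\}$. $\mathbb N^*$ is the set of free ultrafilters on $\mathbb N$; for $p\in\beta\mathbb N$ the $p$-iterate is $f^p(x)=p\text{-}\lim_{n\to\infty}f^n(x)$, where $y=p\text{-}\lim x_n$ means $\{n: x_n\in V\}\in p$ for every neighborhood $V$ of $y$. The Ellis semigroup $E(X,f)$ is the closure of $\{f^n:n\in\mathbb N\}$ in $X^X$ with the product (pointwise) topology; it equals $\{f^p:p\in\beta\mathbb N\}$. The $\omega$-limit set $\omega_f(x)$ is the set of limits of sequences $f^{n_k}(x)$ with $(n_k)$ strictly increasing. An accumulation point is a non-isolated point. *)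

theory Defs
  imports "HOL-Analysis.Analysis"
begin

text \<open>Free ultrafilters on the naturals (the elements of N*), as Isabelle filters on nat.\<close>
definition free_ultrafilter_nat :: "nat filter \<Rightarrow> bool" where
  "free_ultrafilter_nat p \<longleftrightarrow>
     p \<noteq> bot \<and>
     (\<forall>P. eventually P p \<or> eventually (\<lambda>n. \<not> P n) p) \<and>
     (\<forall>m. \<not> eventually (\<lambda>n. n = m) p)"

definition p_iterate :: "'a set \<Rightarrow> ('a::metric_space \<Rightarrow> 'a) \<Rightarrow> nat filter \<Rightarrow> 'a \<Rightarrow> 'a" where
  "p_iterate X f p = restrict (\<lambda>x. Lim p (\<lambda>n. (f ^^ n) x)) X"

definition omega_limit :: "('a::metric_space \<Rightarrow> 'a) \<Rightarrow> 'a \<Rightarrow> 'a set" where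
  "omega_limit f x = {y. \<exists>r. strict_mono r \<and> ((\<lambda>k. (f ^^ (r k)) x) \<longlonglongrightarrow> y)}"

definition transitive_system :: "'a set \<Rightarrow> ('a::metric_space \<Rightarrow> 'a) \<Rightarrow> bool" where
  "transitive_system X f \<longleftrightarrow> (\<exists>x\<in>X. closure {(f ^^ n) x | n. True} = X)"

text \<open>X^X with the product (pointwise) topology; maps are represented extensionally on X.\<close>
definition pointwise_top :: "'a::metric_space set \<Rightarrow> ('a \<Rightarrow> 'a) topology" where
  "pointwise_top X = product_topology (\<lambda>_. top_of_set X) X"

definition ellis_semigroup :: "'a set \<Rightarrow> ('a::metric_space \<Rightarrow> 'a) \<Rightarrow> ('a \<Rightarrow> 'a) set" where
  "ellis_semigroup X f = (pointwise_top X) closure_of {restrict (f ^^ n) X | n. True}"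

end

theory Submission
  imports Defs
begin

lemma ex_ultra_below:
  fixes F :: "'a filter"
  assumes F: "F \<noteq> bot"
  shows "\<exists>U. U \<le> F \<and> U \<noteq> bot \<and> (\<forall>P. eventually P U \<or> eventually (\<lambda>x. \<not> P x) U)"
proof -
  let ?R = "{(b, a). a \<noteq> bot \<and> a \<le> b \<and> b \<le> F}"
  have bot_notin_R: "c \<in> Chains ?R \<Longrightarrow> bot \<notin> c" for c
    by (auto simp: Chains_def)
  have FR[simp]: "Field ?R = {G. G \<noteq> bot \<and> G \<le> F}"
    by (auto simp: Field_def bot_unique)
  have "\<exists>m\<in>Field ?R. \<forall>a\<in>Field ?R. (m, a) \<in> ?R \<longrightarrow> a = m"
  proof (rule Zorns_po_lemma)
    show "Partial_order ?R"
      by (auto simp: partial_order_on_def preorder_on_def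
          antisym_def refl_on_def trans_def Field_def bot_unique)
    show "\<exists>u\<in>Field ?R. \<forall>a\<in>C. (a, u) \<in> ?R" if C: "C \<in> Chains ?R" for C
    proof (simp, intro exI conjI ballI)
      have Inf_C: "Inf C \<noteq> bot" "Inf C \<le> F" if "C \<noteq> {}"
      proof -
        from C that have "Inf C = bot \<longleftrightarrow> (\<exists>x\<in>C. x = bot)"
          unfolding trivial_limit_def by (intro eventually_Inf_base) (auto simp: Chains_def)
        with C show "Inf C \<noteq> bot"
          by (simp add: bot_notin_R)
        from that obtain x where "x \<in> C" by auto
        with C show "Inf C \<le> F"
          by (auto intro!: Inf_lower2[of x] simp: Chains_def)
      qed
      then have [simp]: "inf F (Inf C) = (if C = {} then F else Inf C)"
        using C by (auto simp add: inf_absorb2)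
      from C show "inf F (Inf C) \<noteq> bot"
        by (simp add: F Inf_C)
      from C show "inf F (Inf C) \<le> F"
        by (simp add: Chains_def Inf_C F)
      with C show "inf F (Inf C) \<le> x" "x \<le> F" if "x \<in> C" for x
        using that  by (auto intro: Inf_lower simp: Chains_def)
    qed
  qed
  then obtain U where U: "U \<noteq> bot" "U \<le> F" and max: "\<And>G. G \<noteq> bot \<Longrightarrow> G \<le> U \<Longrightarrow> G = U"
    by auto
  have "eventually P U \<or> eventually (\<lambda>x. \<not> P x) U" for P
  proof (rule disjCI)
    assume "\<not> eventually (\<lambda>x. \<not> P x) U"
    then have "inf U (principal {x. P x}) \<noteq> bot"
      by (simp add: trivial_limit_def eventually_inf_principal)
    then have e: "inf U (principal {x. P x}) = U"
      by (rule max) simp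
    have "eventually P (inf U (principal {x. P x}))"
      by (simp add: eventually_inf_principal)
    then show "eventually P U" by (simp only: e)
  qed
  with U show ?thesis by blast
qed

lemma free_le_seq:
  assumes "free_ultrafilter_nat p"
  shows "p \<le> sequentially"
proof -
  have ev: "eventually (\<lambda>n. N \<le> n) p" for N
  proof (induction N)
    case 0 then show ?case by simp
  next
    case (Suc N)
    have "\<not> eventually (\<lambda>n. n = N) p" using assms unfolding free_ultrafilter_nat_def by blast
    then have "eventually (\<lambda>n. \<not> n = N) p" using assms unfolding free_ultrafilter_nat_def by blast
    with Suc show ?case by (auto elim: eventually_elim2)
  qed
  show ?thesis
    by (rule filter_leI) (auto simp: eventually_sequentially intro: eventually_mono[OF ev])
qed

lemma ultra_lim_exists:
  fixes s :: "nat \<Rightarrow> 'a::metric_space"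
  assumes "compact X" "p \<noteq> bot" "\<forall>P. eventually P p \<or> eventually (\<lambda>x. \<not> P x) p"
    and "\<And>n. s n \<in> X"
  shows "\<exists>l\<in>X. (s \<longlongrightarrow> l) p"
proof -
  have "filtermap s p \<noteq> bot" using assms(2) by (simp add: filtermap_bot_iff)
  moreover have "eventually (\<lambda>x. x \<in> X) (filtermap s p)"
    using assms(4) by (simp add: eventually_filtermap)
  ultimately obtain l where l: "l \<in> X" "inf (nhds l) (filtermap s p) \<noteq> bot"
    using assms(1) unfolding compact_filter by blast
  have "(s \<longlongrightarrow> l) p"
  proof (rule topological_tendstoI)
    fix V assume V: "open V" "l \<in> V"
    show "eventually (\<lambda>n. s n \<in> V) p"
    proof (rule ccontr)
      assume "\<not> eventually (\<lambda>n. s n \<in> V) p"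
      then have "eventually (\<lambda>n. s n \<notin> V) p" using assms(3) by blast
      then have "eventually (\<lambda>x. x \<notin> V) (filtermap s p)" by (simp add: eventually_filtermap)
      moreover have "eventually (\<lambda>x. x \<in> V) (nhds l)" using V by (rule eventually_nhds_in_open)
      ultimately have "eventually (\<lambda>x. False) (inf (nhds l) (filtermap s p))"
        unfolding eventually_inf by blast
      then show False using l(2) by (simp add: trivial_limit_def)
    qed
  qed
  with l show ?thesis by blast
qed

lemma funpow_in:
  assumes "f ` X \<subseteq> X" "x \<in> X"
  shows "(f ^^ n) x \<in> X"
  using assms by (induction n) auto

lemma cont_funpow:
  assumes "continuous_on X f" "f ` X \<subseteq> X"
  shows "continuous_on X (f ^^ n)"
proof (induction n)
  case 0 then show ?case by (simp add: continuous_on_id)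
next
  case (Suc n)
  have "continuous_on X (f \<circ> (f ^^ n))"
    by (rule continuous_on_compose[OF Suc]) (use assms funpow_in in \<open>meson continuous_on_subset image_subsetI\<close>)
  then show ?case by simp
qed

lemma piter_lim:
  fixes f :: "'a::metric_space \<Rightarrow> 'a"
  assumes "compact X" "f ` X \<subseteq> X" "free_ultrafilter_nat p" "x \<in> X"
  shows "p_iterate X f p x \<in> X \<and> ((\<lambda>n. (f ^^ n) x) \<longlongrightarrow> p_iterate X f p x) p"
proof -
  have p: "p \<noteq> bot" "\<forall>P. eventually P p \<or> eventually (\<lambda>x. \<not> P x) p"
    using assms(3) unfolding free_ultrafilter_nat_def by auto
  obtain l where l: "l \<in> X" "((\<lambda>n. (f ^^ n) x) \<longlongrightarrow> l) p"
    using ultra_lim_exists[OF assms(1) p, of "\<lambda>n. (f ^^ n) x"] funpow_in[OF assms(2,4)] by blast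
  have "p_iterate X f p x = l"
    using assms(4) tendsto_Lim[OF _ l(2)] p(1) by (simp add: p_iterate_def)
  with l show ?thesis by simp
qed

lemma piter_commute:
  fixes f :: "'a::metric_space \<Rightarrow> 'a"
  assumes "compact X" "f ` X \<subseteq> X" "continuous_on X f" "free_ultrafilter_nat p" "x \<in> X"
  shows "p_iterate X f p ((f ^^ k) x) = (f ^^ k) (p_iterate X f p x)"
proof -
  have p: "p \<noteq> bot" using assms(4) unfolding free_ultrafilter_nat_def by auto
  have kx: "(f ^^ k) x \<in> X" using funpow_in assms by metis
  note L = piter_lim[OF assms(1,2,4,5)]
  note L2 = piter_lim[OF assms(1,2,4) kx]
  have "((\<lambda>n. (f ^^ k) ((f ^^ n) x)) \<longlongrightarrow> (f ^^ k) (p_iterate X f p x)) p"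
    by (rule continuous_on_tendsto_compose[OF cont_funpow[OF assms(3,2)]])
       (use L funpow_in[OF assms(2,5)] in auto)
  moreover have "(\<lambda>n. (f ^^ k) ((f ^^ n) x)) = (\<lambda>n. (f ^^ n) ((f ^^ k) x))"
  proof
    fix n
    have "(f ^^ k) ((f ^^ n) x) = (f ^^ (k + n)) x" by (simp add: funpow_add)
    also have "\<dots> = (f ^^ (n + k)) x" by (simp add: add.commute)
    also have "\<dots> = (f ^^ n) ((f ^^ k) x)" by (simp add: funpow_add)
    finally show "(f ^^ k) ((f ^^ n) x) = (f ^^ n) ((f ^^ k) x)" .
  qed
  ultimately show ?thesis using L2 tendsto_unique p by (metis trivial_limit_def)
qed

lemma topspace_pw: "topspace (pointwise_top X) = PiE X (\<lambda>_. X)"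
  by (simp add: pointwise_top_def)

lemma proj_cont:
  assumes "x \<in> X"
  shows "continuous_map (pointwise_top X) (top_of_set X) (\<lambda>h. h x)"
  unfolding pointwise_top_def using assms by (rule continuous_map_product_projection)

lemma open_cyl:
  assumes "x \<in> X" "open V"
  shows "openin (pointwise_top X) {h \<in> topspace (pointwise_top X). h x \<in> V}"
proof -
  have "openin (pointwise_top X) {h \<in> topspace (pointwise_top X). h x \<in> X \<inter> V}"
    by (rule openin_continuous_map_preimage[OF proj_cont[OF assms(1)]])
       (use assms(2) in \<open>auto simp: openin_open_Int\<close>)
  moreover have "{h \<in> topspace (pointwise_top X). h x \<in> X \<inter> V} = {h \<in> topspace (pointwise_top X). h x \<in> V}"
    using assms(1) by (auto simp: topspace_pw)
  ultimately show ?thesis by simp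
qed

lemma restrict_in_top:
  assumes "f ` X \<subseteq> X"
  shows "restrict (f ^^ n) X \<in> topspace (pointwise_top X)"
  using funpow_in[OF assms] by (auto simp: topspace_pw)

lemma ellis_repr:
  fixes f :: "'a::metric_space \<Rightarrow> 'a"
  assumes fX: "f ` X \<subseteq> X" and gE: "g \<in> ellis_semigroup X f"
  shows "(\<exists>m. g = restrict (f ^^ m) X) \<or> (\<exists>p. free_ultrafilter_nat p \<and> g = p_iterate X f p)"
proof (cases "\<exists>m. g = restrict (f ^^ m) X")
  case True then show ?thesis by blast
next
  case False
  note nm = False
  let ?T = "pointwise_top X"
  let ?S = "{restrict (f ^^ n) X | n. True}"
  have gT: "g \<in> topspace ?T" and gcl: "\<And>W. g \<in> W \<Longrightarrow> openin ?T W \<Longrightarrow> \<exists>y. y \<in> ?S \<and> y \<in> W"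
    using gE unfolding ellis_semigroup_def in_closure_of by blast+
  define B where "B = {W. openin ?T W \<and> g \<in> W}"
  define F0 where "F0 = (INF W\<in>B. principal {n. restrict (f ^^ n) X \<in> W})"
  have ne: "B \<noteq> {}" using gT by (auto simp: B_def)
  have dir: "\<And>a b. a \<in> B \<Longrightarrow> b \<in> B \<Longrightarrow> \<exists>x\<in>B. principal {n. restrict (f ^^ n) X \<in> x}
           \<le> inf (principal {n. restrict (f ^^ n) X \<in> a}) (principal {n. restrict (f ^^ n) X \<in> b})"
  proof -
    fix a b assume "a \<in> B" "b \<in> B"
    then have "a \<inter> b \<in> B" by (auto simp: B_def)
    then show "\<exists>x\<in>B. principal {n. restrict (f ^^ n) X \<in> x}
         \<le> inf (principal {n. restrict (f ^^ n) X \<in> a}) (principal {n. restrict (f ^^ n) X \<in> b})"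
      by (intro bexI[of _ "a \<inter> b"]) (auto simp: inf_principal)
  qed
  have evF0: "eventually P F0 \<longleftrightarrow> (\<exists>W\<in>B. \<forall>n. restrict (f ^^ n) X \<in> W \<longrightarrow> P n)" for P
    unfolding F0_def using eventually_INF_base[of B "\<lambda>W. principal {n. restrict (f ^^ n) X \<in> W}", OF ne dir]
    by (auto simp: eventually_principal)
  have "F0 \<noteq> bot"
  proof
    assume "F0 = bot"
    then have "eventually (\<lambda>_. False) F0" by simp
    then obtain W where "W \<in> B" "\<forall>n. restrict (f ^^ n) X \<notin> W" by (auto simp: evF0)
    with gcl show False by (auto simp: B_def)
  qed
  then obtain U where U: "U \<le> F0" "U \<noteq> bot" "\<forall>P. eventually P U \<or> eventually (\<lambda>x. \<not> P x) U"
    using ex_ultra_below by blast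
  have cyl: "{h \<in> topspace ?T. h x \<in> V} \<in> B" if "x \<in> X" "open V" "g x \<in> V" for x V
    using open_cyl[OF that(1,2)] gT that(3) by (auto simp: B_def)
  have free: "\<not> eventually (\<lambda>n. n = m) U" for m
  proof
    assume em: "eventually (\<lambda>n. n = m) U"
    have rT: "restrict (f ^^ m) X \<in> topspace ?T" by (rule restrict_in_top[OF fX])
    have "g \<noteq> restrict (f ^^ m) X" using nm by blast
    then obtain x where x: "x \<in> X" "g x \<noteq> restrict (f ^^ m) X x"
      using gT rT unfolding topspace_pw by (metis PiE_ext)
    then obtain V where V: "open V" "g x \<in> V" "restrict (f ^^ m) X x \<notin> V"
      using t1_space by blast
    have "eventually (\<lambda>n. n \<noteq> m) F0"
      unfolding evF0 using x V by (intro bexI[OF _ cyl[OF x(1) V(1,2)]]) auto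
    then have "eventually (\<lambda>n. n \<noteq> m) U" by (rule filter_leD[OF U(1)])
    with em have "eventually (\<lambda>_. False) U" by (auto elim: eventually_elim2)
    with U(2) show False by (simp add: trivial_limit_def)
  qed
  have "g = p_iterate X f U"
  proof
    fix x
    show "g x = p_iterate X f U x"
    proof (cases "x \<in> X")
      case False
      then show ?thesis using gT by (auto simp: topspace_pw p_iterate_def PiE_def extensional_def)
    next
      case True
      have "((\<lambda>n. (f ^^ n) x) \<longlongrightarrow> g x) U"
      proof (rule topological_tendstoI)
        fix V assume V: "open V" "g x \<in> V"
        have "eventually (\<lambda>n. (f ^^ n) x \<in> V) F0"
          unfolding evF0 using True V by (intro bexI[OF _ cyl[OF True V]]) auto
        then show "eventually (\<lambda>n. (f ^^ n) x \<in> V) U" by (rule filter_leD[OF U(1)])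
      qed
      then have "Lim U (\<lambda>n. (f ^^ n) x) = g x" using U(2) by (intro tendsto_Lim) auto
      then show ?thesis using True by (simp add: p_iterate_def)
    qed
  qed
  moreover have "free_ultrafilter_nat U"
    using U free unfolding free_ultrafilter_nat_def by blast
  ultimately show ?thesis by blast
qed

lemma E_props:
  fixes f :: "'a::metric_space \<Rightarrow> 'a"
  assumes "compact X" "f ` X \<subseteq> X" "continuous_on X f" "g \<in> ellis_semigroup X f"
  shows "g \<in> PiE X (\<lambda>_. X)" "x \<in> X \<Longrightarrow> g ((f ^^ k) x) = (f ^^ k) (g x)"
proof -
  show gT: "g \<in> PiE X (\<lambda>_. X)"
    using assms(4) closure_of_subset_topspace[of "pointwise_top X"] unfolding ellis_semigroup_def topspace_pw[symmetric] by blast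
  assume x: "x \<in> X"
  have kx: "(f ^^ k) x \<in> X" using funpow_in[OF assms(2) x] .
  from ellis_repr[OF assms(2,4)] show "g ((f ^^ k) x) = (f ^^ k) (g x)"
  proof
    assume "\<exists>m. g = restrict (f ^^ m) X"
    then obtain m where m: "g = restrict (f ^^ m) X" by blast
    have "(f ^^ m) ((f ^^ k) x) = (f ^^ (m + k)) x" by (simp add: funpow_add)
    also have "\<dots> = (f ^^ (k + m)) x" by (simp add: add.commute)
    also have "\<dots> = (f ^^ k) ((f ^^ m) x)" by (simp add: funpow_add)
    finally show ?thesis using m x kx by simp
  next
    assume "\<exists>p. free_ultrafilter_nat p \<and> g = p_iterate X f p"
    then obtain p where "free_ultrafilter_nat p" "g = p_iterate X f p" by blast
    then show ?thesis using piter_commute[OF assms(1,2,3) _ x] by simp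
  qed
qed

lemma omega_conv:
  fixes f :: "'a::metric_space \<Rightarrow> 'a"
  assumes "compact X" "f ` X \<subseteq> X" "x \<in> X" "card (omega_limit f x) = 1"
  shows "\<exists>y. ((\<lambda>n. (f ^^ n) x) \<longlonglongrightarrow> y)"
proof -
  define s where "s = (\<lambda>n. (f ^^ n) x)"
  have sX: "s n \<in> X" for n unfolding s_def using funpow_in[OF assms(2,3)] .
  obtain y0 where y0: "omega_limit f x = {y0}" using assms(4) by (rule card_1_singletonE)
  have "s \<longlonglongrightarrow> y0"
  proof (rule ccontr)
    assume "\<not> s \<longlonglongrightarrow> y0"
    then obtain e where e: "e > 0" "\<forall>N. \<exists>n\<ge>N. dist (s n) y0 \<ge> e"
      unfolding lim_sequentially by (meson not_less)
    define A where "A = {n. dist (s n) y0 \<ge> e}"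
    have infA: "infinite A" unfolding A_def infinite_nat_iff_unbounded_le using e(2) by blast
    define r where "r = enumerate A"
    have r: "strict_mono r" unfolding r_def using infA by (rule strict_mono_enumerate)
    have rA: "dist (s (r n)) y0 \<ge> e" for n
      using enumerate_in_set[OF infA, of n] unfolding r_def A_def by simp
    obtain l r' where l: "l \<in> X" "strict_mono r'" "((s \<circ> r) \<circ> r') \<longlonglongrightarrow> l"
      using assms(1) sX unfolding compact_def by (metis comp_apply)
    have "(\<lambda>n. dist (((s \<circ> r) \<circ> r') n) y0) \<longlonglongrightarrow> dist l y0"
      by (intro tendsto_intros l(3))
    then have "e \<le> dist l y0"
      by (rule LIMSEQ_le_const) (use rA in auto)
    moreover have "l \<in> omega_limit f x"
      unfolding omega_limit_def
      using l(3) strict_mono_o[OF r l(2)] by (intro CollectI exI[of _ "r \<circ> r'"]) (auto simp: s_def comp_def)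
    ultimately show False using y0 e(1) by auto
  qed
  then show ?thesis unfolding s_def by blast
qed

lemma piter_conv:
  fixes f :: "'a::metric_space \<Rightarrow> 'a"
  assumes "free_ultrafilter_nat p" "x \<in> X" "(\<lambda>n. (f ^^ n) x) \<longlonglongrightarrow> y"
  shows "p_iterate X f p x = y"
proof -
  have "((\<lambda>n. (f ^^ n) x) \<longlongrightarrow> y) p" using assms(3) free_le_seq[OF assms(1)] by (rule tendsto_mono[rotated])
  moreover have "p \<noteq> bot" using assms(1) unfolding free_ultrafilter_nat_def by auto
  ultimately show ?thesis using assms(2) by (simp add: p_iterate_def tendsto_Lim)
qed

lemma mixed_false:
  fixes f :: "'a::metric_space \<Rightarrow> 'a"
  assumes X: "compact X" "f ` X \<subseteq> X" "continuous_on X f" and x0: "x0 \<in> X"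
    and injorb: "\<And>i j. (f ^^ i) x0 = (f ^^ j) x0 \<Longrightarrow> i = j"
    and p: "free_ultrafilter_nat p" and eq: "(f ^^ m) x0 = p_iterate X f p x0"
    and conv: "\<forall>z\<in>X. z islimpt X \<longrightarrow> (\<exists>y. (\<lambda>n. (f ^^ n) z) \<longlonglongrightarrow> y)"
  shows False
proof -
  define z where "z = (f ^^ m) x0"
  have zX: "z \<in> X" unfolding z_def using funpow_in[OF X(2) x0] .
  have pb: "p \<noteq> bot" and pu: "\<forall>P. eventually P p \<or> eventually (\<lambda>x. \<not> P x) p"
    and pf: "\<not> eventually (\<lambda>n. n = m) p"
    using p unfolding free_ultrafilter_nat_def by auto
  have L: "((\<lambda>n. (f ^^ n) x0) \<longlongrightarrow> z) p"
    using piter_lim[OF X(1,2) p x0] eq unfolding z_def by simp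
  have "z islimpt X"
  proof (rule islimptI)
    fix T assume T: "z \<in> T" "open T"
    have "eventually (\<lambda>n. (f ^^ n) x0 \<in> T) p" using topological_tendstoD[OF L T(2,1)] .
    moreover have "eventually (\<lambda>n. n \<noteq> m) p" using pu pf by blast
    ultimately have "eventually (\<lambda>n. (f ^^ n) x0 \<in> T \<and> n \<noteq> m) p" by (rule eventually_conj)
    then obtain n where "(f ^^ n) x0 \<in> T" "n \<noteq> m" using eventually_happens pb by blast
    then show "\<exists>y\<in>X. y \<in> T \<and> y \<noteq> z"
      using funpow_in[OF X(2) x0, of n] injorb unfolding z_def by blast
  qed
  then obtain w where w: "(\<lambda>n. (f ^^ n) z) \<longlonglongrightarrow> w" using conv zX by blast
  have "(\<lambda>n. (f ^^ n) z) = (\<lambda>n. (f ^^ (n + m)) x0)"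
    unfolding z_def by (simp add: funpow_add)
  with w have w2: "(\<lambda>n. (f ^^ n) x0) \<longlonglongrightarrow> w" by (auto intro: LIMSEQ_offset)
  have zw: "z = w" using piter_conv[OF p x0 w2] eq unfolding z_def by simp
  have "(\<lambda>n. f ((f ^^ n) x0)) \<longlonglongrightarrow> f w"
    by (rule continuous_on_tendsto_compose[OF X(3) w2]) (use zX zw funpow_in[OF X(2) x0] in auto)
  moreover have "(\<lambda>n. f ((f ^^ n) x0)) \<longlonglongrightarrow> w"
    using LIMSEQ_Suc[OF w2] by simp
  ultimately have "f w = w" by (rule LIMSEQ_unique)
  then have "(f ^^ Suc m) x0 = (f ^^ m) x0" using zw unfolding z_def by simp
  then show False using injorb by fastforce
qed

lemma finite_orbit:
  fixes f :: "'a \<Rightarrow> 'a"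
  assumes "i < j" "(f ^^ i) x0 = (f ^^ j) x0"
  shows "\<exists>k'<j. (f ^^ k) x0 = (f ^^ k') x0"
proof (induction k rule: less_induct)
  case (less k)
  show ?case
  proof (cases "k < j")
    case True then show ?thesis by blast
  next
    case False
    have kk: "k = (k - j) + j" using False by simp
    have "(f ^^ k) x0 = (f ^^ ((k - j) + j)) x0" using kk by metis
    also have "\<dots> = (f ^^ (k - j)) ((f ^^ j) x0)" by (simp add: funpow_add)
    finally have "(f ^^ k) x0 = (f ^^ (k - j)) ((f ^^ j) x0)" .
    also have "\<dots> = (f ^^ (k - j)) ((f ^^ i) x0)" using assms(2) by simp
    also have "\<dots> = (f ^^ (k - j + i)) x0" by (simp add: funpow_add)
    finally have e: "(f ^^ k) x0 = (f ^^ (k - j + i)) x0" .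
    have "k - j + i < k" using False assms(1) by linarith
    then obtain k' where "k' < j" "(f ^^ (k - j + i)) x0 = (f ^^ k') x0" using less by blast
    then show ?thesis using e by auto
  qed
qed

theorem theorem4p2:
  fixes X :: "'a::metric_space set" and f :: "'a \<Rightarrow> 'a"
  assumes "compact X" and "countable X"
    and "f ` X \<subseteq> X" and "continuous_on X f"
    and "transitive_system X f"
    and "(\<forall>p. free_ultrafilter_nat p \<longrightarrow>
             continuous_map (top_of_set X) (top_of_set X) (p_iterate X f p))
         \<or> (\<forall>x\<in>X. x islimpt X \<longrightarrow> card (omega_limit f x) = 1)"
  shows "subtopology (pointwise_top X) (ellis_semigroup X f) homeomorphic_space top_of_set X"
proof -
  note X = assms(1,3,4)
  obtain x0 where x0: "x0 \<in> X" and clO: "closure {(f ^^ n) x0 | n. True} = X"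
    using assms(5) unfolding transitive_system_def by blast
  define Orb where "Orb = {(f ^^ n) x0 | n. True}"
  have OrbX: "Orb \<subseteq> X" unfolding Orb_def using funpow_in[OF assms(3) x0] by blast
  let ?T = "pointwise_top X"
  let ?E = "ellis_semigroup X f"
  have ET: "?E \<subseteq> topspace ?T"
    unfolding ellis_semigroup_def by (rule closure_of_subset_topspace)
  have Eg: "g \<in> PiE X (\<lambda>_. X)" if "g \<in> ?E" for g using E_props(1)[OF X that] .
  have Ecomm: "g ((f ^^ n) x0) = (f ^^ n) (g x0)" if "g \<in> ?E" for g n
    using E_props(2)[OF X that x0] .
  have agree: "\<forall>x\<in>X. g x = h x" if gE: "g \<in> ?E" and hE: "h \<in> ?E" and e: "g x0 = h x0" for g h
  proof
    fix x assume xX: "x \<in> X"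
    have orb: "g ((f ^^ n) x0) = h ((f ^^ n) x0)" for n using Ecomm[OF gE] Ecomm[OF hE] e by simp
    show "g x = h x"
    proof (cases "x \<in> Orb")
      case True then show ?thesis using orb unfolding Orb_def by blast
    next
      case xO: False
      have injorb: "i = j" if eqij: "(f ^^ i) x0 = (f ^^ j) x0" for i j
      proof (rule ccontr)
        assume "i \<noteq> j"
        then obtain a b where ab: "a < b" "(f ^^ a) x0 = (f ^^ b) x0"
          using eqij by (metis linorder_neqE_nat)
        have "Orb \<subseteq> (\<lambda>k. (f ^^ k) x0) ` {..<b}"
          unfolding Orb_def using finite_orbit[OF ab] by fastforce
        then have "finite Orb" by (rule finite_subset) simp
        then have "closure Orb = Orb" by (simp add: finite_imp_closed closure_closed)
        then have "Orb = X" using clO unfolding Orb_def by simp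
        then show False using xO xX by simp
      qed
      have xl: "x islimpt X"
      proof -
        have "x \<in> closure Orb" using xX clO unfolding Orb_def by simp
        then have "x islimpt Orb" using xO unfolding closure_def by simp
        then show ?thesis using OrbX by (rule islimpt_subset)
      qed
      from assms(6) show ?thesis
      proof
        assume c1: "\<forall>p. free_ultrafilter_nat p \<longrightarrow>
             continuous_map (top_of_set X) (top_of_set X) (p_iterate X f p)"
        have cont: "continuous_on X k" if "k \<in> ?E" for k
          using ellis_repr[OF assms(3) that]
        proof
          assume "\<exists>m. k = restrict (f ^^ m) X"
          then obtain m where m: "k = restrict (f ^^ m) X" by blast
          show ?thesis unfolding m
            using cont_funpow[OF assms(4,3), of m] by (rule continuous_on_cong[THEN iffD1, rotated 2]) auto
        next
          assume "\<exists>p. free_ultrafilter_nat p \<and> k = p_iterate X f p"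
          then show ?thesis using c1 by auto
        qed
        have "x \<in> closure Orb" using xX clO unfolding Orb_def by simp
        then obtain t where t: "\<And>n. t n \<in> Orb" "t \<longlonglongrightarrow> x" unfolding closure_sequential by blast
        have tX: "\<forall>\<^sub>F n in sequentially. t n \<in> X" using t(1) OrbX by (intro always_eventually) auto
        have "(\<lambda>n. g (t n)) \<longlonglongrightarrow> g x"
          by (rule continuous_on_tendsto_compose[OF cont[OF gE] t(2) xX tX])
        moreover have "(\<lambda>n. h (t n)) \<longlonglongrightarrow> h x"
          by (rule continuous_on_tendsto_compose[OF cont[OF hE] t(2) xX tX])
        moreover have "(\<lambda>n. g (t n)) = (\<lambda>n. h (t n))"
        proof
          fix n
          obtain k where "t n = (f ^^ k) x0" using t(1)[of n] unfolding Orb_def by blast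
          then show "g (t n) = h (t n)" using orb by simp
        qed
        ultimately show ?thesis using LIMSEQ_unique by metis
      next
        assume c2: "\<forall>x\<in>X. x islimpt X \<longrightarrow> card (omega_limit f x) = 1"
        have conv: "\<forall>z\<in>X. z islimpt X \<longrightarrow> (\<exists>y. (\<lambda>n. (f ^^ n) z) \<longlonglongrightarrow> y)"
          using c2 omega_conv[OF assms(1,3)] by blast
        obtain y where y: "(\<lambda>n. (f ^^ n) x) \<longlonglongrightarrow> y" using conv xX xl by blast
        from ellis_repr[OF assms(3) gE] show ?thesis
        proof
          assume "\<exists>m. g = restrict (f ^^ m) X"
          then obtain m where m: "g = restrict (f ^^ m) X" by blast
          from ellis_repr[OF assms(3) hE] show ?thesis
          proof
            assume "\<exists>m. h = restrict (f ^^ m) X"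
            then obtain m' where m': "h = restrict (f ^^ m') X" by blast
            have "m = m'" using e m m' x0 injorb by simp
            then show ?thesis using m m' by simp
          next
            assume "\<exists>p. free_ultrafilter_nat p \<and> h = p_iterate X f p"
            then obtain p where p: "free_ultrafilter_nat p" "h = p_iterate X f p" by blast
            have "(f ^^ m) x0 = p_iterate X f p x0" using e m p x0 by simp
            from mixed_false[OF X x0 injorb p(1) this conv] show ?thesis by blast
          qed
        next
          assume "\<exists>p. free_ultrafilter_nat p \<and> g = p_iterate X f p"
          then obtain p where p: "free_ultrafilter_nat p" "g = p_iterate X f p" by blast
          from ellis_repr[OF assms(3) hE] show ?thesis
          proof
            assume "\<exists>m. h = restrict (f ^^ m) X"
            then obtain m where m: "h = restrict (f ^^ m) X" by blast
            have "(f ^^ m) x0 = p_iterate X f p x0" using e m p x0 by simp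
            from mixed_false[OF X x0 injorb p(1) this conv] show ?thesis by blast
          next
            assume "\<exists>q. free_ultrafilter_nat q \<and> h = p_iterate X f q"
            then obtain q where q: "free_ultrafilter_nat q" "h = p_iterate X f q" by blast
            show ?thesis using piter_conv[OF p(1) xX y] piter_conv[OF q(1) xX y] p q by simp
          qed
        qed
      qed
    qed
  qed
  have inj: "inj_on (\<lambda>g. g x0) ?E"
  proof (rule inj_onI)
    fix g h assume gE: "g \<in> ?E" and hE: "h \<in> ?E" and "g x0 = h x0"
    then have "\<forall>x\<in>X. g x = h x" by (rule agree)
    then show "g = h" using Eg[OF gE] Eg[OF hE] by (metis PiE_ext)
  qed
  have tsE: "topspace (subtopology ?T ?E) = ?E" using ET by auto
  have csT: "compact_space ?T"
    unfolding pointwise_top_def compact_space_product_topology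
    using assms(1) by (auto intro: compact_space_subtopology)
  have csE: "compact_space (subtopology ?T ?E)"
    by (rule compact_space_subtopology[OF closedin_compact_space[OF csT]])
       (simp add: ellis_semigroup_def)
  have cm: "continuous_map (subtopology ?T ?E) (top_of_set X) (\<lambda>g. g x0)"
    by (rule continuous_map_from_subtopology[OF proj_cont[OF x0]])
  have haus: "Hausdorff_space (top_of_set X)"
    by (rule Hausdorff_space_subtopology) simp
  have img: "(\<lambda>g. g x0) ` ?E = X"
  proof
    show "(\<lambda>g. g x0) ` ?E \<subseteq> X" using Eg x0 by auto
    have "compactin (top_of_set X) ((\<lambda>g. g x0) ` ?E)"
      using image_compactin[OF _ cm] csE tsE by (metis compact_space_def)
    then have "compact ((\<lambda>g. g x0) ` ?E)" by (simp add: compactin_subtopology)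
    then have cl: "closed ((\<lambda>g. g x0) ` ?E)" by (rule compact_imp_closed)
    have "Orb \<subseteq> (\<lambda>g. g x0) ` ?E"
    proof
      fix y assume "y \<in> Orb"
      then obtain n where n: "y = (f ^^ n) x0" unfolding Orb_def by blast
      have "restrict (f ^^ n) X \<in> ?E"
        unfolding ellis_semigroup_def
        by (rule subsetD[OF closure_of_subset]) (use restrict_in_top[OF assms(3)] in auto)
      moreover have "y = restrict (f ^^ n) X x0" using n x0 by simp
      ultimately show "y \<in> (\<lambda>g. g x0) ` ?E" by (rule rev_image_eqI[where f="\<lambda>g. g x0"])
    qed
    then have "closure Orb \<subseteq> (\<lambda>g. g x0) ` ?E" using cl by (rule closure_minimal)
    then show "X \<subseteq> (\<lambda>g. g x0) ` ?E" using clO unfolding Orb_def by simp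
  qed
  have "homeomorphic_map (subtopology ?T ?E) (top_of_set X) (\<lambda>g. g x0)"
    by (rule continuous_imp_homeomorphic_map[OF cm csE haus]) (use tsE img inj in auto)
  then show ?thesis unfolding homeomorphic_map_maps homeomorphic_space_def by blast
qed

end
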